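(* Let $s>1/2$. Then for every $t\in\mathbb{R}$ the trilinear operator $R_3$ defined in the context maps $(\dot H^s)^3$ into $\dot H^s$ and satisfies $$\|R_3(u,v,w)\|_{\dot H^s}\le c_6(s)\|u\|_{\dot H^s}\|v\|_{\dot H^s}\|w\|_{\dot H^s},$$ with a constant $c_6(s)$ depending only on $s$.
   Context: Write $\mathbb{Z}_0=\mathbb{Z}\setminus\{0\}$. For $s\in\mathbb{R}$, $\dot H^s$ denotes the Hilbert space of complex sequences $v=(v_k)_{k\in\mathbb{Z}_0}$ with $\|v\|_{\dot H^s}^2=\sum_{k\in\mathbb{Z}_0}|k|^{2s}|v_k|^2<\infty$. For $t\in\mathbb{R}$, $$R_3(u,v,w)_k=\sum_{k_1+k_2+k_3=k,\ k_1,k_2,k_3\in\mathbb{Z}_0}\frac{e^{3i(k_1+k_2)(k_2+k_3)(k_3+k_1)t}}{k_1}u_{k_1}v_{k_2}w_{k_3},\qquad k\in\mathbb{Z}_0.$$ *)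

theory Defs
  imports "HOL-Analysis.Analysis"
begin

text \<open>Sequences indexed by Z_0 = Z - {0} are modelled as functions int => complex;
  the value at index 0 is ignored by every definition below.\<close>

definition Z0 :: "int set" where "Z0 = UNIV - {0}"

definition Hs_weight :: "real \<Rightarrow> (int \<Rightarrow> complex) \<Rightarrow> int \<Rightarrow> real" where
  "Hs_weight s v k = (real_of_int \<bar>k\<bar>) powr (2 * s) * (norm (v k))\<^sup>2"

definition in_Hs :: "real \<Rightarrow> (int \<Rightarrow> complex) \<Rightarrow> bool" where
  "in_Hs s v \<longleftrightarrow> (Hs_weight s v) summable_on Z0"

definition Hs_norm :: "real \<Rightarrow> (int \<Rightarrow> complex) \<Rightarrow> real" where
  "Hs_norm s v = sqrt (infsum (Hs_weight s v) Z0)"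

definition R3_index :: "int \<Rightarrow> (int \<times> int \<times> int) set" where
  "R3_index k = {(k1, k2, k3). k1 \<noteq> 0 \<and> k2 \<noteq> 0 \<and> k3 \<noteq> 0 \<and> k1 + k2 + k3 = k}"

definition R3_term :: "real \<Rightarrow> (int \<Rightarrow> complex) \<Rightarrow> (int \<Rightarrow> complex) \<Rightarrow> (int \<Rightarrow> complex)
    \<Rightarrow> int \<times> int \<times> int \<Rightarrow> complex" where
  "R3_term t u v w = (\<lambda>(k1, k2, k3).
     exp (\<i> * complex_of_real (3 * real_of_int ((k1 + k2) * (k2 + k3) * (k3 + k1)) * t))
       / of_int k1 * u k1 * v k2 * w k3)"

definition R3 :: "real \<Rightarrow> (int \<Rightarrow> complex) \<Rightarrow> (int \<Rightarrow> complex) \<Rightarrow> (int \<Rightarrow> complex) \<Rightarrow> int \<Rightarrow> complex" where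
  "R3 t u v w k = infsum (R3_term t u v w) (R3_index k)"

end

theory Submission
  imports Defs
begin


lemma nn_bound:
  fixes f :: "'a \<Rightarrow> real"
  assumes "\<And>x. x\<in>A \<Longrightarrow> 0 \<le> f x" "\<And>F. finite F \<Longrightarrow> F \<subseteq> A \<Longrightarrow> sum f F \<le> B"
  shows "f summable_on A" "infsum f A \<le> B"
proof -
  show S: "f summable_on A"
    by (rule nonneg_bdd_above_summable_on) (use assms in \<open>auto intro!: bdd_aboveI2\<close>)
  show "infsum f A \<le> B" by (rule infsum_le_finite_sums[OF S]) (use assms in auto)
qed

lemma sum_le_infsum:
  fixes f :: "'a \<Rightarrow> real"
  assumes "\<And>x. x\<in>A \<Longrightarrow> 0 \<le> f x" "f summable_on A" "finite F" "F \<subseteq> A"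
  shows "sum f F \<le> infsum f A"
proof -
  have "infsum f F \<le> infsum f A"
    by (rule infsum_mono_neutral) (use assms in auto)
  thus ?thesis using assms by simp
qed

lemma wCS:
  fixes f w :: "'a \<Rightarrow> real"
  assumes nf: "\<And>x. x\<in>A \<Longrightarrow> 0 \<le> f x" and nw: "\<And>x. x\<in>A \<Longrightarrow> 0 \<le> w x"
    and s1: "(\<lambda>x. (f x)\<^sup>2 * w x) summable_on A" and s2: "w summable_on A"
  shows "(\<lambda>x. f x * w x) summable_on A"
    "infsum (\<lambda>x. f x * w x) A \<le> sqrt (infsum (\<lambda>x. (f x)\<^sup>2 * w x) A) * sqrt (infsum w A)"
proof -
  have fin: "sum (\<lambda>x. f x * w x) F \<le> sqrt (infsum (\<lambda>x. (f x)\<^sup>2 * w x) A) * sqrt (infsum w A)"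
    if F: "finite F" "F \<subseteq> A" for F
  proof -
    have "(\<Sum>i\<in>F. (f i * sqrt (w i)) * sqrt (w i))\<^sup>2 \<le> (\<Sum>i\<in>F. (f i * sqrt (w i))\<^sup>2) * (\<Sum>i\<in>F. (sqrt (w i))\<^sup>2)"
      by (rule Cauchy_Schwarz_ineq_sum)
    also have "(\<Sum>i\<in>F. (f i * sqrt (w i))\<^sup>2) = (\<Sum>i\<in>F. (f i)\<^sup>2 * w i)"
      by (rule sum.cong) (use F nw in \<open>auto simp: power_mult_distrib\<close>)
    also have "(\<Sum>i\<in>F. (sqrt (w i))\<^sup>2) = (\<Sum>i\<in>F. w i)"
      by (rule sum.cong) (use F nw in auto)
    also have "(\<Sum>i\<in>F. (f i * sqrt (w i)) * sqrt (w i)) = (\<Sum>i\<in>F. f i * w i)"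
      by (rule sum.cong) (use F nw in \<open>auto simp: mult.assoc\<close>)
    finally have 1: "(\<Sum>i\<in>F. f i * w i)\<^sup>2 \<le> (\<Sum>i\<in>F. (f i)\<^sup>2 * w i) * (\<Sum>i\<in>F. w i)" .
    have 2: "(\<Sum>i\<in>F. (f i)\<^sup>2 * w i) \<le> infsum (\<lambda>x. (f x)\<^sup>2 * w x) A"
      by (rule sum_le_infsum) (use F nw s1 in auto)
    have 3: "(\<Sum>i\<in>F. w i) \<le> infsum w A"
      by (rule sum_le_infsum) (use F nw s2 in auto)
    have p1: "0 \<le> (\<Sum>i\<in>F. (f i)\<^sup>2 * w i)" using F nw by (auto intro!: sum_nonneg)
    have p2: "0 \<le> (\<Sum>i\<in>F. w i)" using F nw by (auto intro!: sum_nonneg)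
    have "(\<Sum>i\<in>F. f i * w i) \<le> sqrt ((\<Sum>i\<in>F. f i * w i)\<^sup>2)" by simp
    also have "\<dots> \<le> sqrt (infsum (\<lambda>x. (f x)\<^sup>2 * w x) A * infsum w A)"
      using 1 2 3 p1 p2 by (meson mult_mono order_trans real_sqrt_le_iff order.trans[OF p2 3])
    finally show ?thesis by (simp add: real_sqrt_mult)
  qed
  show "(\<lambda>x. f x * w x) summable_on A"
    by (rule nn_bound(1)[OF _ fin]) (use nf nw in auto)
  show "infsum (\<lambda>x. f x * w x) A \<le> sqrt (infsum (\<lambda>x. (f x)\<^sup>2 * w x) A) * sqrt (infsum w A)"
    by (rule nn_bound(2)[OF _ fin]) (use nf nw in auto)
qed

lemma prod3:
  fixes f1 f2 f3 :: "'a \<Rightarrow> real"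
  assumes n1: "\<And>x. x\<in>S \<Longrightarrow> 0 \<le> f1 x" and n2: "\<And>x. x\<in>S \<Longrightarrow> 0 \<le> f2 x" and n3: "\<And>x. x\<in>S \<Longrightarrow> 0 \<le> f3 x"
    and b1: "\<And>X. finite X \<Longrightarrow> X \<subseteq> S \<Longrightarrow> sum f1 X \<le> B1"
    and b2: "\<And>X. finite X \<Longrightarrow> X \<subseteq> S \<Longrightarrow> sum f2 X \<le> B2"
    and b3: "\<And>X. finite X \<Longrightarrow> X \<subseteq> S \<Longrightarrow> sum f3 X \<le> B3"
    and F: "finite F" "F \<subseteq> S \<times> S \<times> S"
  shows "sum (\<lambda>(x,y,z). f1 x * f2 y * f3 z) F \<le> B1 * B2 * B3"
proof -
  define F1 where "F1 = fst ` F"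
  define F2 where "F2 = fst ` snd ` F"
  define F3 where "F3 = snd ` snd ` F"
  have sub: "F \<subseteq> F1 \<times> F2 \<times> F3" unfolding F1_def F2_def F3_def by force
  have fi: "finite F1" "finite F2" "finite F3" using F unfolding F1_def F2_def F3_def by auto
  have ss: "F1 \<subseteq> S" "F2 \<subseteq> S" "F3 \<subseteq> S" using F unfolding F1_def F2_def F3_def by force+
  have "sum (\<lambda>(x,y,z). f1 x * f2 y * f3 z) F \<le> sum (\<lambda>(x,y,z). f1 x * f2 y * f3 z) (F1 \<times> F2 \<times> F3)"
    by (rule sum_mono2) (use fi sub ss n1 n2 n3 in \<open>auto intro!: mult_nonneg_nonneg\<close>)
  also have "\<dots> = (\<Sum>x\<in>F1. \<Sum>y\<in>F2. \<Sum>z\<in>F3. f1 x * f2 y * f3 z)"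
    by (simp add: sum.cartesian_product)
  also have "\<dots> = sum f1 F1 * sum f2 F2 * sum f3 F3"
    by (simp add: sum_distrib_left[symmetric] sum_distrib_right[symmetric] mult.assoc[symmetric])
  also have "\<dots> \<le> B1 * B2 * B3"
  proof -
    have z: "0 \<le> sum f1 F1" "0 \<le> sum f2 F2" "0 \<le> sum f3 F3"
      using ss n1 n2 n3 by (auto intro!: sum_nonneg)
    have "sum f1 F1 \<le> B1" "sum f2 F2 \<le> B2" "sum f3 F3 \<le> B3" using b1 b2 b3 fi ss by auto
    thus ?thesis using z by (meson mult_mono order_trans mult_nonneg_nonneg)
  qed
  finally show ?thesis .
qed

lemma prod2:
  fixes f2 f3 :: "'a \<Rightarrow> real"
  assumes n2: "\<And>x. x\<in>S \<Longrightarrow> 0 \<le> f2 x" and n3: "\<And>x. x\<in>S \<Longrightarrow> 0 \<le> f3 x"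
    and b2: "\<And>X. finite X \<Longrightarrow> X \<subseteq> S \<Longrightarrow> sum f2 X \<le> B2"
    and b3: "\<And>X. finite X \<Longrightarrow> X \<subseteq> S \<Longrightarrow> sum f3 X \<le> B3"
    and F: "finite F" "F \<subseteq> S \<times> S"
  shows "sum (\<lambda>(y,z). f2 y * f3 z) F \<le> B2 * B3"
proof -
  define F2 where "F2 = fst ` F"
  define F3 where "F3 = snd ` F"
  have sub: "F \<subseteq> F2 \<times> F3" unfolding F2_def F3_def by force
  have fi: "finite F2" "finite F3" using F unfolding F2_def F3_def by auto
  have ss: "F2 \<subseteq> S" "F3 \<subseteq> S" using F unfolding F2_def F3_def by force+
  have "sum (\<lambda>(y,z). f2 y * f3 z) F \<le> sum (\<lambda>(y,z). f2 y * f3 z) (F2 \<times> F3)"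
    by (rule sum_mono2) (use fi sub ss n2 n3 in \<open>auto intro!: mult_nonneg_nonneg\<close>)
  also have "\<dots> = (\<Sum>y\<in>F2. \<Sum>z\<in>F3. f2 y * f3 z)"
    by (simp add: sum.cartesian_product)
  also have "\<dots> = sum f2 F2 * sum f3 F3"
    by (simp add: sum_product)
  also have "\<dots> \<le> B2 * B3"
  proof -
    have z: "0 \<le> sum f2 F2" "0 \<le> sum f3 F3"
      using ss n2 n3 by (auto intro!: sum_nonneg)
    have "sum f2 F2 \<le> B2" "sum f3 F3 \<le> B3" using b2 b3 fi ss by auto
    thus ?thesis using z by (meson mult_mono order_trans)
  qed
  finally show ?thesis .
qed




lemma Z2_summable:
  assumes "s > 1/2"
  shows "(\<lambda>k::int. (real_of_int \<bar>k\<bar>) powr (-2 * s)) summable_on Z0"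
proof -
  let ?f = "\<lambda>k::int. (real_of_int \<bar>k\<bar>) powr (-2 * s)"
  have "summable (\<lambda>n::nat. real n powr (-2 * s))"
    using assms by (subst summable_real_powr_iff) simp
  hence n: "(\<lambda>n::nat. real n powr (-2 * s)) summable_on UNIV"
    by (subst summable_on_UNIV_nonneg_real_iff) auto
  hence n1: "(\<lambda>n::nat. real n powr (-2 * s)) summable_on {1..}"
    by (rule summable_on_subset) auto
  have p: "?f summable_on (int ` {1..})"
    by (subst summable_on_reindex) (use n1 in \<open>auto simp: o_def inj_on_def\<close>)
  have m: "?f summable_on ((\<lambda>n. - int n) ` {1..})"
    by (subst summable_on_reindex) (use n1 in \<open>auto simp: o_def inj_on_def\<close>)
  have u: "?f summable_on (int ` {1..} \<union> (\<lambda>n. - int n) ` {1..})"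
    by (rule summable_on_Un_disjoint[OF p m]) auto
  have eq: "int ` {1..} \<union> (\<lambda>n. - int n) ` {1..} = Z0"
  proof
    show "int ` {1..} \<union> (\<lambda>n. - int n) ` {1..} \<subseteq> Z0" by (auto simp: Z0_def)
    show "Z0 \<subseteq> int ` {1..} \<union> (\<lambda>n. - int n) ` {1..}"
    proof
      fix k assume "k \<in> Z0"
      hence "k \<noteq> 0" by (simp add: Z0_def)
      show "k \<in> int ` {1..} \<union> (\<lambda>n. - int n) ` {1..}"
      proof (cases "k > 0")
        case True
        hence "k = int (nat k)" "nat k \<in> {1..}" by auto
        thus ?thesis by blast
      next
        case False
        hence "k = - int (nat (-k))" "nat (-k) \<in> {1..}" using \<open>k\<noteq>0\<close> by auto
        thus ?thesis by blast
      qed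
    qed
  qed
  show ?thesis using u eq by simp
qed

definition Z2 :: "real \<Rightarrow> real" where
  "Z2 s = infsum (\<lambda>k::int. (real_of_int \<bar>k\<bar>) powr (-2 * s)) Z0"

lemma Hs_weight_nonneg: "0 \<le> Hs_weight s v k"
  by (simp add: Hs_weight_def)

lemma Hs_norm_sq: "(Hs_norm s v)\<^sup>2 = infsum (Hs_weight s v) Z0"
proof -
  have "0 \<le> infsum (Hs_weight s v) Z0" by (intro infsum_nonneg Hs_weight_nonneg)
  thus ?thesis unfolding Hs_norm_def by simp
qed

lemma powr_sq: "(x::real) \<ge> 0 \<Longrightarrow> (x powr a)\<^sup>2 = x powr (2 * a)"
proof -
  have "(x powr a)\<^sup>2 = x powr a * x powr a" by (simp add: power2_eq_square)
  also have "\<dots> = x powr (a + a)" by (rule powr_add[symmetric])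
  also have "a + a = 2 * a" by simp
  finally show ?thesis .
qed

lemma Hs_norm_nonneg: "0 \<le> Hs_norm s v"
  using infsum_nonneg[of Z0 "Hs_weight s v"] Hs_weight_nonneg unfolding Hs_norm_def by simp

lemma Hs_weight_sq: "k \<noteq> 0 \<Longrightarrow> Hs_weight s v k = ((real_of_int \<bar>k\<bar>) powr s * norm (v k))\<^sup>2"
proof -
  have "((real_of_int \<bar>k\<bar>) powr s * norm (v k))\<^sup>2 = ((real_of_int \<bar>k\<bar>) powr s)\<^sup>2 * (norm (v k))\<^sup>2"
    by (rule power_mult_distrib)
  also have "((real_of_int \<bar>k\<bar>) powr s)\<^sup>2 = (real_of_int \<bar>k\<bar>) powr (2 * s)"
    by (rule powr_sq) simp
  finally show ?thesis unfolding Hs_weight_def by simp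
qed

lemma l1_bound:
  assumes s: "s > 1/2" and u: "in_Hs s u" and F: "finite F" "F \<subseteq> Z0"
  shows "sum (\<lambda>k. norm (u k)) F \<le> sqrt (Z2 s) * Hs_norm s u"
proof -
  have "(\<Sum>k\<in>F. (real_of_int \<bar>k\<bar>) powr (-s) * ((real_of_int \<bar>k\<bar>) powr s * norm (u k)))\<^sup>2
     \<le> (\<Sum>k\<in>F. ((real_of_int \<bar>k\<bar>) powr (-s))\<^sup>2) * (\<Sum>k\<in>F. ((real_of_int \<bar>k\<bar>) powr s * norm (u k))\<^sup>2)"
    by (rule Cauchy_Schwarz_ineq_sum)
  also have "(\<Sum>k\<in>F. (real_of_int \<bar>k\<bar>) powr (-s) * ((real_of_int \<bar>k\<bar>) powr s * norm (u k))) = (\<Sum>k\<in>F. norm (u k))"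
    by (rule sum.cong) (use F in \<open>auto simp: Z0_def powr_minus field_simps\<close>)
  also have "(\<Sum>k\<in>F. ((real_of_int \<bar>k\<bar>) powr (-s))\<^sup>2) = (\<Sum>k\<in>F. (real_of_int \<bar>k\<bar>) powr (-2 * s))"
    by (rule sum.cong) (use F in \<open>auto simp: Z0_def powr_sq\<close>)
  also have "(\<Sum>k\<in>F. ((real_of_int \<bar>k\<bar>) powr s * norm (u k))\<^sup>2) = (\<Sum>k\<in>F. Hs_weight s u k)"
  proof (rule sum.cong)
    fix x assume "x \<in> F" hence "x \<noteq> 0" using F by (auto simp: Z0_def)
    thus "(real_of_int \<bar>x\<bar> powr s * norm (u x))\<^sup>2 = Hs_weight s u x" by (simp add: Hs_weight_sq)
  qed simp
  finally have 1: "(\<Sum>k\<in>F. norm (u k))\<^sup>2 \<le> (\<Sum>k\<in>F. (real_of_int \<bar>k\<bar>) powr (-2 * s)) * (\<Sum>k\<in>F. Hs_weight s u k)" .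
  have 2: "(\<Sum>k\<in>F. (real_of_int \<bar>k\<bar>) powr (-2 * s)) \<le> Z2 s"
    unfolding Z2_def by (rule sum_le_infsum) (use F Z2_summable[OF s] in auto)
  have 3: "(\<Sum>k\<in>F. Hs_weight s u k) \<le> (Hs_norm s u)\<^sup>2"
    unfolding Hs_norm_sq by (rule sum_le_infsum) (use F u in \<open>auto simp: in_Hs_def Hs_weight_nonneg\<close>)
  have p: "0 \<le> (\<Sum>k\<in>F. Hs_weight s u k)" by (auto intro!: sum_nonneg Hs_weight_nonneg)
  have q: "0 \<le> (\<Sum>k\<in>F. (real_of_int \<bar>k\<bar>) powr (-2 * s))" by (auto intro!: sum_nonneg)
  have "(\<Sum>k\<in>F. norm (u k))\<^sup>2 \<le> Z2 s * (Hs_norm s u)\<^sup>2"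
  proof -
    have "(\<Sum>k\<in>F. (real_of_int \<bar>k\<bar>) powr (-2 * s)) * (\<Sum>k\<in>F. Hs_weight s u k) \<le> Z2 s * (Hs_norm s u)\<^sup>2"
      by (rule mult_mono[OF 2 3 order.trans[OF q 2] p])
    thus ?thesis using 1 by linarith
  qed
  hence "(\<Sum>k\<in>F. norm (u k)) \<le> sqrt (Z2 s * (Hs_norm s u)\<^sup>2)" by (rule real_le_rsqrt)
  thus ?thesis by (simp add: real_sqrt_mult Hs_norm_nonneg)
qed




lemma R3_index_sub: "R3_index k \<subseteq> Z0 \<times> Z0 \<times> Z0"
  by (auto simp: R3_index_def Z0_def)

lemma R3_index_disj: "k \<noteq> k' \<Longrightarrow> R3_index k \<inter> R3_index k' = {}"
  by (auto simp: R3_index_def)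

lemma young3:
  fixes F G H :: "int \<Rightarrow> real"
  assumes nF: "\<And>x. x\<in>Z0 \<Longrightarrow> 0 \<le> F x" and nG: "\<And>x. x\<in>Z0 \<Longrightarrow> 0 \<le> G x"
    and nH: "\<And>x. x\<in>Z0 \<Longrightarrow> 0 \<le> H x"
    and sF: "(\<lambda>k. (F k)\<^sup>2) summable_on Z0"
    and bG: "\<And>X. finite X \<Longrightarrow> X \<subseteq> Z0 \<Longrightarrow> sum G X \<le> LG"
    and bH: "\<And>X. finite X \<Longrightarrow> X \<subseteq> Z0 \<Longrightarrow> sum H X \<le> LH"
  shows "(\<lambda>(k1,k2,k3). F k1 * G k2 * H k3) summable_on R3_index k"
    and "finite K \<Longrightarrow> (\<Sum>k\<in>K. (infsum (\<lambda>(k1,k2,k3). F k1 * G k2 * H k3) (R3_index k))\<^sup>2)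
            \<le> infsum (\<lambda>k. (F k)\<^sup>2) Z0 * LG\<^sup>2 * LH\<^sup>2"
proof -
  define NF where "NF = infsum (\<lambda>k. (F k)\<^sup>2) Z0"
  have bF: "sum (\<lambda>k. (F k)\<^sup>2) X \<le> NF" if "finite X" "X \<subseteq> Z0" for X
    unfolding NF_def by (rule sum_le_infsum) (use that sF in auto)
  have LG0: "0 \<le> LG" using bG[of "{}"] by simp
  have LH0: "0 \<le> LH" using bH[of "{}"] by simp
  have NF0: "0 \<le> NF" using bF[of "{}"] by simp
  define f where "f = (\<lambda>p::int\<times>int\<times>int. F (fst p))"
  define w where "w = (\<lambda>p::int\<times>int\<times>int. G (fst (snd p)) * H (snd (snd p)))"
  define f2w where "f2w = (\<lambda>(x,y,z). (F x)\<^sup>2 * G y * H z)"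
  have eqf: "(\<lambda>(k1,k2,k3). F k1 * G k2 * H k3) = (\<lambda>p. f p * w p)"
    by (auto simp: f_def w_def fun_eq_iff mult.assoc)
  have eqf2: "(\<lambda>p. (f p)\<^sup>2 * w p) = f2w"
    by (auto simp: f_def w_def f2w_def fun_eq_iff mult.assoc)
  have nI: "0 \<le> f p" "0 \<le> w p" if "p \<in> R3_index k" for p k
    using that R3_index_sub[of k] nF nG nH by (force simp: f_def w_def intro!: mult_nonneg_nonneg)+
  have f2w_fin: "sum f2w X \<le> NF * LG * LH" if "finite X" "X \<subseteq> Z0 \<times> Z0 \<times> Z0" for X
    unfolding f2w_def
    by (rule prod3[where S=Z0]) (use that nF nG nH bF bG bH in auto)
  have f2w_nn: "0 \<le> f2w p" if "p \<in> Z0 \<times> Z0 \<times> Z0" for p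
    using that nG nH by (auto simp: f2w_def intro!: mult_nonneg_nonneg)
  have wI: "w summable_on R3_index k \<and> infsum w (R3_index k) \<le> LG * LH" for k
  proof -
    have fin: "sum w X \<le> LG * LH" if X: "finite X" "X \<subseteq> R3_index k" for X
    proof -
      have inj: "inj_on snd X"
      proof (rule inj_onI)
        fix p q assume "p \<in> X" "q \<in> X" "snd p = snd q"
        moreover have "p \<in> R3_index k" "q \<in> R3_index k" using X \<open>p \<in> X\<close> \<open>q \<in> X\<close> by auto
        ultimately show "p = q" by (cases p; cases q) (auto simp: R3_index_def)
      qed
      have "sum w X = sum (\<lambda>(y,z). G y * H z) (snd ` X)"
        by (subst sum.reindex[OF inj]) (auto simp: w_def case_prod_beta)
      also have "\<dots> \<le> LG * LH"
        by (rule prod2[where S=Z0]) (use X R3_index_sub[of k] nG nH bG bH in force)+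
      finally show ?thesis .
    qed
    show ?thesis using nn_bound[OF _ fin] nI by blast
  qed
  have PI: "f2w summable_on R3_index k" for k
    by (rule nn_bound(1)[OF _ f2w_fin]) (use R3_index_sub[of k] f2w_nn in auto)
  have Q: "(\<lambda>p. f p * w p) summable_on R3_index k \<and>
      (infsum (\<lambda>p. f p * w p) (R3_index k))\<^sup>2 \<le> infsum f2w (R3_index k) * (LG * LH)" for k
  proof -
    have s1: "(\<lambda>p. (f p)\<^sup>2 * w p) summable_on R3_index k" using PI eqf2 by simp
    note c = wCS[OF nI(1) nI(2) s1 conjunct1[OF wI]]
    have q0: "0 \<le> infsum (\<lambda>p. f p * w p) (R3_index k)"
      by (rule infsum_nonneg) (use nI in \<open>auto intro!: mult_nonneg_nonneg\<close>)
    have p0: "0 \<le> infsum f2w (R3_index k)"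
      by (rule infsum_nonneg) (use R3_index_sub[of k] f2w_nn in auto)
    have w0: "0 \<le> infsum w (R3_index k)"
      by (rule infsum_nonneg) (use nI in auto)
    have "(infsum (\<lambda>p. f p * w p) (R3_index k))\<^sup>2 \<le> (sqrt (infsum f2w (R3_index k)) * sqrt (infsum w (R3_index k)))\<^sup>2"
      using c(2) q0 eqf2 by (simp add: power_mono)
    also have "\<dots> = infsum f2w (R3_index k) * infsum w (R3_index k)"
      using p0 w0 by (simp add: power_mult_distrib)
    also have "\<dots> \<le> infsum f2w (R3_index k) * (LG * LH)"
      using wI p0 by (simp add: mult_left_mono)
    finally show ?thesis using c(1) by simp
  qed
  show "(\<lambda>(k1,k2,k3). F k1 * G k2 * H k3) summable_on R3_index k"
    using Q eqf by simp
  assume K: "finite K"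
  have "(\<Sum>k\<in>K. (infsum (\<lambda>(k1,k2,k3). F k1 * G k2 * H k3) (R3_index k))\<^sup>2)
      \<le> (\<Sum>k\<in>K. infsum f2w (R3_index k) * (LG * LH))"
    unfolding eqf by (rule sum_mono) (use Q in blast)
  also have "\<dots> = (\<Sum>k\<in>K. infsum f2w (R3_index k)) * (LG * LH)"
    by (simp add: sum_distrib_right)
  also have "(\<Sum>k\<in>K. infsum f2w (R3_index k)) = infsum f2w (\<Union>k\<in>K. R3_index k)"
    by (rule sum_infsum) (use K PI R3_index_disj in auto)
  also have "infsum f2w (\<Union>k\<in>K. R3_index k) \<le> NF * LG * LH"
  proof (rule nn_bound(2))
    show "0 \<le> f2w x" if "x \<in> (\<Union>k\<in>K. R3_index k)" for x
      using that R3_index_sub f2w_nn by blast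
    show "sum f2w X \<le> NF * LG * LH" if "finite X" "X \<subseteq> (\<Union>k\<in>K. R3_index k)" for X
      using that R3_index_sub f2w_fin by (meson UN_least order_trans)
  qed
  hence "infsum f2w (\<Union>k\<in>K. R3_index k) * (LG * LH) \<le> NF * LG * LH * (LG * LH)"
    using LG0 LH0 by (simp add: mult_right_mono)
  finally show "(\<Sum>k\<in>K. (infsum (\<lambda>(k1,k2,k3). F k1 * G k2 * H k3) (R3_index k))\<^sup>2)
            \<le> infsum (\<lambda>k. (F k)\<^sup>2) Z0 * LG\<^sup>2 * LH\<^sup>2"
    by (simp add: NF_def power2_eq_square mult_ac)
qed




lemma weight_ineq:
  assumes "s \<ge> 0"
  shows "(real_of_int \<bar>k1+k2+k3\<bar>) powr s \<le> 3 powr s * ((real_of_int \<bar>k1\<bar>) powr s + (real_of_int \<bar>k2\<bar>) powr s + (real_of_int \<bar>k3\<bar>) powr s)"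
proof -
  define M where "M = max (real_of_int \<bar>k1\<bar>) (max (real_of_int \<bar>k2\<bar>) (real_of_int \<bar>k3\<bar>))"
  have M0: "0 \<le> M" by (simp add: M_def)
  have le3: "real_of_int \<bar>k1+k2+k3\<bar> \<le> 3 * M" unfolding M_def by linarith
  have "(real_of_int \<bar>k1+k2+k3\<bar>) powr s \<le> (3 * M) powr s"
    using powr_mono2[OF assms _ le3] by simp
  also have "\<dots> = 3 powr s * M powr s" using M0 by (simp add: powr_mult)
  also have "M powr s \<le> (real_of_int \<bar>k1\<bar>) powr s + (real_of_int \<bar>k2\<bar>) powr s + (real_of_int \<bar>k3\<bar>) powr s"
  proof -
    have "M = real_of_int \<bar>k1\<bar> \<or> M = real_of_int \<bar>k2\<bar> \<or> M = real_of_int \<bar>k3\<bar>"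
      unfolding M_def by linarith
    moreover have "0 \<le> (real_of_int \<bar>k1\<bar>) powr s" "0 \<le> (real_of_int \<bar>k2\<bar>) powr s" "0 \<le> (real_of_int \<bar>k3\<bar>) powr s"
      by auto
    ultimately show ?thesis by auto
  qed
  hence "3 powr s * M powr s \<le> 3 powr s * ((real_of_int \<bar>k1\<bar>) powr s + (real_of_int \<bar>k2\<bar>) powr s + (real_of_int \<bar>k3\<bar>) powr s)"
    by (rule mult_left_mono) simp
  finally show ?thesis .
qed

lemma term_bound:
  assumes "k1 \<noteq> 0"
  shows "norm (R3_term t u v w (k1,k2,k3)) \<le> norm (u k1) * norm (v k2) * norm (w k3)"
proof -
  have e: "norm (exp (\<i> * complex_of_real (3 * real_of_int ((k1 + k2) * (k2 + k3) * (k3 + k1)) * t))) = 1"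
    by (rule norm_exp_i_times)
  have "norm (R3_term t u v w (k1,k2,k3)) = (1 / real_of_int \<bar>k1\<bar>) * (norm (u k1) * norm (v k2) * norm (w k3))"
    unfolding R3_term_def by (simp add: norm_mult norm_divide e)
  also have "\<dots> \<le> 1 * (norm (u k1) * norm (v k2) * norm (w k3))"
    by (rule mult_right_mono) (use assms in auto)
  finally show ?thesis by simp
qed




theorem lemma7p17:
  fixes s :: real
  assumes "s > 1/2"
  shows "\<exists>c6::real. \<forall>(t::real) u v w.
           in_Hs s u \<and> in_Hs s v \<and> in_Hs s w \<longrightarrow>
             (\<forall>k\<in>Z0. (R3_term t u v w) summable_on (R3_index k)) \<and>
             in_Hs s (R3 t u v w) \<and>
             Hs_norm s (R3 t u v w) \<le> c6 * Hs_norm s u * Hs_norm s v * Hs_norm s w"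
proof -
  have s0: "s \<ge> 0" using assms by simp
  define c6 where "c6 = 3 * 3 powr s * Z2 s"
  have Z20: "0 \<le> Z2 s" unfolding Z2_def by (rule infsum_nonneg) simp
  show ?thesis
  proof (intro exI[of _ c6] allI impI)
    fix t u v w assume H: "in_Hs s u \<and> in_Hs s v \<and> in_Hs s w"
    define a where "a = (\<lambda>k. norm (u k))"
    define b where "b = (\<lambda>k. norm (v k))"
    define c where "c = (\<lambda>k. norm (w k))"
    define A where "A = (\<lambda>k. (real_of_int \<bar>k\<bar>) powr s * norm (u k))"
    define B where "B = (\<lambda>k. (real_of_int \<bar>k\<bar>) powr s * norm (v k))"
    define C where "C = (\<lambda>k. (real_of_int \<bar>k\<bar>) powr s * norm (w k))"
    define Na where "Na = Hs_norm s u"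
    define Nb where "Nb = Hs_norm s v"
    define Nc where "Nc = Hs_norm s w"
    define L where "L = sqrt (Z2 s)"
    have L2: "L\<^sup>2 = Z2 s" using Z20 by (simp add: L_def)
    have la: "\<And>X. finite X \<Longrightarrow> X \<subseteq> Z0 \<Longrightarrow> sum a X \<le> L * Na"
      unfolding a_def L_def Na_def using l1_bound[OF assms] H by blast
    have lb: "\<And>X. finite X \<Longrightarrow> X \<subseteq> Z0 \<Longrightarrow> sum b X \<le> L * Nb"
      unfolding b_def L_def Nb_def using l1_bound[OF assms] H by blast
    have lc: "\<And>X. finite X \<Longrightarrow> X \<subseteq> Z0 \<Longrightarrow> sum c X \<le> L * Nc"
      unfolding c_def L_def Nc_def using l1_bound[OF assms] H by blast
    have nn: "0 \<le> a x" "0 \<le> b x" "0 \<le> c x" "0 \<le> A x" "0 \<le> B x" "0 \<le> C x" for x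
      by (auto simp: a_def b_def c_def A_def B_def C_def)
    have sq: "(\<lambda>k. ((real_of_int \<bar>k\<bar>) powr s * norm (z k))\<^sup>2) summable_on Z0 \<and>
              infsum (\<lambda>k. ((real_of_int \<bar>k\<bar>) powr s * norm (z k))\<^sup>2) Z0 = (Hs_norm s z)\<^sup>2"
      if "in_Hs s z" for z
    proof -
      have eq: "\<And>k. k \<in> Z0 \<Longrightarrow> ((real_of_int \<bar>k\<bar>) powr s * norm (z k))\<^sup>2 = Hs_weight s z k"
        by (simp add: Z0_def Hs_weight_sq)
      have e1: "(\<lambda>k. ((real_of_int \<bar>k\<bar>) powr s * norm (z k))\<^sup>2) summable_on Z0 \<longleftrightarrow> Hs_weight s z summable_on Z0"
        by (rule summable_on_cong) (rule eq)
      have e2: "infsum (\<lambda>k. ((real_of_int \<bar>k\<bar>) powr s * norm (z k))\<^sup>2) Z0 = infsum (Hs_weight s z) Z0"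
        by (rule infsum_cong) (rule eq)
      show ?thesis
        using that e1 e2 by (simp add: in_Hs_def Hs_norm_sq)
    qed
    have sA: "(\<lambda>k. (A k)\<^sup>2) summable_on Z0" "infsum (\<lambda>k. (A k)\<^sup>2) Z0 = Na\<^sup>2"
      using sq[of u] H by (simp_all add: A_def Na_def)
    have sB: "(\<lambda>k. (B k)\<^sup>2) summable_on Z0" "infsum (\<lambda>k. (B k)\<^sup>2) Z0 = Nb\<^sup>2"
      using sq[of v] H by (simp_all add: B_def Nb_def)
    have sC: "(\<lambda>k. (C k)\<^sup>2) summable_on Z0" "infsum (\<lambda>k. (C k)\<^sup>2) Z0 = Nc\<^sup>2"
      using sq[of w] H by (simp_all add: C_def Nc_def)
    have Y1_1: "(\<lambda>(k1,k2,k3). A k1 * b k2 * c k3) summable_on R3_index k" for k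
      by (rule young3(1)[of A b c "L*Nb" "L*Nc"]) (use nn sA lb lc in auto)
    have Y1_2: "(\<Sum>k\<in>K. (infsum (\<lambda>(k1,k2,k3). A k1 * b k2 * c k3) (R3_index k))\<^sup>2)
            \<le> infsum (\<lambda>k. (A k)\<^sup>2) Z0 * (L*Nb)\<^sup>2 * (L*Nc)\<^sup>2" if "finite K" for K
      by (rule young3(2)[of A b c "L*Nb" "L*Nc"]) (use nn sA lb lc that in auto)
    have Y2_1: "(\<lambda>(k1,k2,k3). B k1 * a k2 * c k3) summable_on R3_index k" for k
      by (rule young3(1)[of B a c "L*Na" "L*Nc"]) (use nn sB la lc in auto)
    have Y2_2: "(\<Sum>k\<in>K. (infsum (\<lambda>(k1,k2,k3). B k1 * a k2 * c k3) (R3_index k))\<^sup>2)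
            \<le> infsum (\<lambda>k. (B k)\<^sup>2) Z0 * (L*Na)\<^sup>2 * (L*Nc)\<^sup>2" if "finite K" for K
      by (rule young3(2)[of B a c "L*Na" "L*Nc"]) (use nn sB la lc that in auto)
    have Y3_1: "(\<lambda>(k1,k2,k3). C k1 * b k2 * a k3) summable_on R3_index k" for k
      by (rule young3(1)[of C b a "L*Nb" "L*Na"]) (use nn sC lb la in auto)
    have Y3_2: "(\<Sum>k\<in>K. (infsum (\<lambda>(k1,k2,k3). C k1 * b k2 * a k3) (R3_index k))\<^sup>2)
            \<le> infsum (\<lambda>k. (C k)\<^sup>2) Z0 * (L*Nb)\<^sup>2 * (L*Na)\<^sup>2" if "finite K" for K
      by (rule young3(2)[of C b a "L*Nb" "L*Na"]) (use nn sC lb la that in auto)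
    define Q1 where "Q1 = (\<lambda>k. infsum (\<lambda>(k1,k2,k3). A k1 * b k2 * c k3) (R3_index k))"
    define Q2 where "Q2 = (\<lambda>k. infsum (\<lambda>(k1,k2,k3). B k1 * a k2 * c k3) (R3_index k))"
    define Q3 where "Q3 = (\<lambda>k. infsum (\<lambda>(k1,k2,k3). C k1 * b k2 * a k3) (R3_index k))"
    define g where "g = (\<lambda>(k1,k2,k3). a k1 * b k2 * c k3)"
    have gnn: "0 \<le> g p" for p by (cases p) (simp add: g_def nn)
    have gs: "g summable_on R3_index k" for k
    proof (rule nn_bound(1))
      show "0 \<le> g x" for x by (rule gnn)
      show "sum g F \<le> L * Na * (L * Nb) * (L * Nc)" if "finite F" "F \<subseteq> R3_index k" for F
        unfolding g_def by (rule prod3[where S=Z0]) (use that R3_index_sub[of k] nn la lb lc in auto)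
    qed
    have termsum: "R3_term t u v w summable_on R3_index k \<and> norm (R3 t u v w k) \<le> infsum g (R3_index k)" for k
    proof -
      have nb: "norm (R3_term t u v w p) \<le> g p" if "p \<in> R3_index k" for p
        using that term_bound by (cases p) (auto simp: g_def a_def b_def c_def R3_index_def)
      have ns: "(\<lambda>p. norm (R3_term t u v w p)) summable_on R3_index k"
        by (rule Infinite_Sum.abs_summable_on_comparison_test'[OF gs nb])
      have "norm (R3 t u v w k) \<le> infsum (\<lambda>p. norm (R3_term t u v w p)) (R3_index k)"
        unfolding R3_def by (rule norm_infsum_bound[OF ns])
      also have "\<dots> \<le> infsum g (R3_index k)"
        by (rule infsum_mono[OF ns gs nb])
      finally show ?thesis using Infinite_Sum.abs_summable_summable[OF ns] by simp
    qed
    have Q0: "0 \<le> Q1 k" "0 \<le> Q2 k" "0 \<le> Q3 k" for k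
      unfolding Q1_def Q2_def Q3_def by (auto intro!: infsum_nonneg mult_nonneg_nonneg simp: nn)
    have kbound: "Hs_weight s (R3 t u v w) k \<le> (3 powr s)\<^sup>2 * 3 * ((Q1 k)\<^sup>2 + (Q2 k)\<^sup>2 + (Q3 k)\<^sup>2)"
      if k: "k \<in> Z0" for k
    proof -
      define q1 where "q1 = (\<lambda>(k1,k2,k3). A k1 * b k2 * c k3)"
      define q2 where "q2 = (\<lambda>(k1,k2,k3). a k1 * B k2 * c k3)"
      define q3 where "q3 = (\<lambda>(k1,k2,k3). a k1 * b k2 * C k3)"
      define sw12 where "sw12 = (\<lambda>(x::int,y::int,z::int). (y,x,z))"
      define sw13 where "sw13 = (\<lambda>(x::int,y::int,z::int). (z,y,x))"
      have q1s: "q1 summable_on R3_index k" "infsum q1 (R3_index k) = Q1 k"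
        using Y1_1 by (simp_all add: q1_def Q1_def)
      have bw12: "\<And>p. p \<in> R3_index k \<Longrightarrow> sw12 (sw12 p) = p" "\<And>p. p \<in> R3_index k \<Longrightarrow> sw12 p \<in> R3_index k"
        by (auto simp: sw12_def R3_index_def)
      have bw13: "\<And>p. p \<in> R3_index k \<Longrightarrow> sw13 (sw13 p) = p" "\<And>p. p \<in> R3_index k \<Longrightarrow> sw13 p \<in> R3_index k"
        by (auto simp: sw13_def R3_index_def)
      have h2: "\<And>p. p \<in> R3_index k \<Longrightarrow> (\<lambda>(k1,k2,k3). B k1 * a k2 * c k3) (sw12 p) = q2 p"
        by (auto simp: sw12_def q2_def)
      have h3: "\<And>p. p \<in> R3_index k \<Longrightarrow> (\<lambda>(k1,k2,k3). C k1 * b k2 * a k3) (sw13 p) = q3 p"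
        by (auto simp: sw13_def q3_def)
      have q2s: "q2 summable_on R3_index k" "infsum q2 (R3_index k) = Q2 k"
        using summable_on_reindex_bij_witness[of "R3_index k" sw12 sw12 "R3_index k" "(\<lambda>(k1,k2,k3). B k1 * a k2 * c k3)" q2, OF bw12(1) bw12(2) bw12(1) bw12(2) h2]
          infsum_reindex_bij_witness[of "R3_index k" sw12 sw12 "R3_index k" "(\<lambda>(k1,k2,k3). B k1 * a k2 * c k3)" q2, OF bw12(1) bw12(2) bw12(1) bw12(2) h2] Y2_1
        by (simp_all add: Q2_def)
      have q3s: "q3 summable_on R3_index k" "infsum q3 (R3_index k) = Q3 k"
        using summable_on_reindex_bij_witness[of "R3_index k" sw13 sw13 "R3_index k" "(\<lambda>(k1,k2,k3). C k1 * b k2 * a k3)" q3, OF bw13(1) bw13(2) bw13(1) bw13(2) h3]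
          infsum_reindex_bij_witness[of "R3_index k" sw13 sw13 "R3_index k" "(\<lambda>(k1,k2,k3). C k1 * b k2 * a k3)" q3, OF bw13(1) bw13(2) bw13(1) bw13(2) h3] Y3_1
        by (simp_all add: Q3_def)
      let ?w = "(real_of_int \<bar>k\<bar>) powr s"
      have pw: "?w * g p \<le> 3 powr s * (q1 p + q2 p + q3 p)" if "p \<in> R3_index k" for p
      proof -
        obtain k1 k2 k3 where p0: "p = (k1,k2,k3)" by (cases p)
        have p: "p = (k1,k2,k3)" "k = k1 + k2 + k3" using that p0 by (auto simp: R3_index_def)
        have "?w * g p \<le> (3 powr s * ((real_of_int \<bar>k1\<bar>) powr s + (real_of_int \<bar>k2\<bar>) powr s + (real_of_int \<bar>k3\<bar>) powr s)) * g p"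
          using weight_ineq[OF s0, of k1 k2 k3] p gnn by (simp add: mult_right_mono)
        also have "\<dots> = 3 powr s * (q1 p + q2 p + q3 p)"
          by (simp add: p g_def q1_def q2_def q3_def A_def B_def C_def a_def b_def c_def algebra_simps)
        finally show ?thesis .
      qed
      have s123: "(\<lambda>p. q1 p + q2 p + q3 p) summable_on R3_index k"
        by (intro summable_on_add q1s(1) q2s(1) q3s(1))
      have "?w * infsum g (R3_index k) = infsum (\<lambda>p. ?w * g p) (R3_index k)"
        by (rule infsum_cmult_right[symmetric]) (use gs in simp)
      also have "\<dots> \<le> infsum (\<lambda>p. 3 powr s * (q1 p + q2 p + q3 p)) (R3_index k)"
        by (rule infsum_mono) (use gs s123 pw in \<open>auto intro: summable_on_cmult_right\<close>)
      also have "\<dots> = 3 powr s * infsum (\<lambda>p. q1 p + q2 p + q3 p) (R3_index k)"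
        by (rule infsum_cmult_right) (use s123 in simp)
      also have "infsum (\<lambda>p. q1 p + q2 p + q3 p) (R3_index k) = Q1 k + Q2 k + Q3 k"
        by (simp add: infsum_add summable_on_add q1s q2s q3s)
      finally have m: "?w * infsum g (R3_index k) \<le> 3 powr s * (Q1 k + Q2 k + Q3 k)" .
      have "?w * norm (R3 t u v w k) \<le> ?w * infsum g (R3_index k)"
        using termsum[of k] by (simp add: mult_left_mono)
      with m have m2: "?w * norm (R3 t u v w k) \<le> 3 powr s * (Q1 k + Q2 k + Q3 k)" by linarith
      have "Hs_weight s (R3 t u v w) k = (?w * norm (R3 t u v w k))\<^sup>2"
        using k by (simp add: Z0_def Hs_weight_sq)
      also have "\<dots> \<le> (3 powr s * (Q1 k + Q2 k + Q3 k))\<^sup>2"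
        by (rule power_mono[OF m2]) simp
      also have "\<dots> = (3 powr s)\<^sup>2 * (Q1 k + Q2 k + Q3 k)\<^sup>2"
        by (simp add: power_mult_distrib)
      also have "(Q1 k + Q2 k + Q3 k)\<^sup>2 \<le> 3 * ((Q1 k)\<^sup>2 + (Q2 k)\<^sup>2 + (Q3 k)\<^sup>2)"
      proof -
        have "0 \<le> (Q1 k - Q2 k)\<^sup>2 + (Q2 k - Q3 k)\<^sup>2 + (Q1 k - Q3 k)\<^sup>2" by simp
        thus ?thesis by (simp add: power2_eq_square algebra_simps)
      qed
      hence "(3 powr s)\<^sup>2 * (Q1 k + Q2 k + Q3 k)\<^sup>2 \<le> (3 powr s)\<^sup>2 * (3 * ((Q1 k)\<^sup>2 + (Q2 k)\<^sup>2 + (Q3 k)\<^sup>2))"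
        by (rule mult_left_mono) simp
      finally show ?thesis by (simp add: mult.assoc)
    qed
    have fin: "sum (Hs_weight s (R3 t u v w)) K \<le> (c6 * Na * Nb * Nc)\<^sup>2" if K: "finite K" "K \<subseteq> Z0" for K
    proof -
      have "sum (Hs_weight s (R3 t u v w)) K \<le> (\<Sum>k\<in>K. (3 powr s)\<^sup>2 * 3 * ((Q1 k)\<^sup>2 + (Q2 k)\<^sup>2 + (Q3 k)\<^sup>2))"
        by (rule sum_mono) (use K kbound in blast)
      also have "\<dots> = (3 powr s)\<^sup>2 * 3 * ((\<Sum>k\<in>K. (Q1 k)\<^sup>2) + (\<Sum>k\<in>K. (Q2 k)\<^sup>2) + (\<Sum>k\<in>K. (Q3 k)\<^sup>2))"
        by (simp only: sum_distrib_left[symmetric] sum.distrib)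
      also have "\<dots> \<le> (3 powr s)\<^sup>2 * 3 * (Na\<^sup>2 * (L * Nb)\<^sup>2 * (L * Nc)\<^sup>2 + Nb\<^sup>2 * (L * Na)\<^sup>2 * (L * Nc)\<^sup>2 + Nc\<^sup>2 * (L * Nb)\<^sup>2 * (L * Na)\<^sup>2)"
      proof -
        have "(\<Sum>k\<in>K. (Q1 k)\<^sup>2) \<le> Na\<^sup>2 * (L * Nb)\<^sup>2 * (L * Nc)\<^sup>2"
          using Y1_2[OF K(1)] sA(2) by (simp add: Q1_def)
        moreover have "(\<Sum>k\<in>K. (Q2 k)\<^sup>2) \<le> Nb\<^sup>2 * (L * Na)\<^sup>2 * (L * Nc)\<^sup>2"
          using Y2_2[OF K(1)] sB(2) by (simp add: Q2_def)
        moreover have "(\<Sum>k\<in>K. (Q3 k)\<^sup>2) \<le> Nc\<^sup>2 * (L * Nb)\<^sup>2 * (L * Na)\<^sup>2"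
          using Y3_2[OF K(1)] sC(2) by (simp add: Q3_def)
        ultimately show ?thesis by (intro mult_left_mono) simp_all
      qed
      also have "\<dots> = (c6 * Na * Nb * Nc)\<^sup>2"
        by (simp add: c6_def power_mult_distrib L2[symmetric] power2_eq_square)
      finally show ?thesis .
    qed
    have summ: "Hs_weight s (R3 t u v w) summable_on Z0"
      by (rule nn_bound(1)[OF _ fin]) (simp_all add: Hs_weight_nonneg)
    have inf: "infsum (Hs_weight s (R3 t u v w)) Z0 \<le> (c6 * Na * Nb * Nc)\<^sup>2"
      by (rule nn_bound(2)[OF _ fin]) (simp_all add: Hs_weight_nonneg)
    have c60: "0 \<le> c6 * Na * Nb * Nc"
      using Z20 by (simp add: c6_def Na_def Nb_def Nc_def Hs_norm_nonneg)
    have "Hs_norm s (R3 t u v w) \<le> sqrt ((c6 * Na * Nb * Nc)\<^sup>2)"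
      unfolding Hs_norm_def using inf by (rule real_sqrt_le_mono)
    also have "\<dots> = c6 * Na * Nb * Nc" using c60 by simp
    finally show "(\<forall>k\<in>Z0. (R3_term t u v w) summable_on (R3_index k)) \<and>
             in_Hs s (R3 t u v w) \<and>
             Hs_norm s (R3 t u v w) \<le> c6 * Hs_norm s u * Hs_norm s v * Hs_norm s w"
      using termsum summ by (simp add: in_Hs_def Na_def Nb_def Nc_def)
  qed
qed


end
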